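(* Consider the operational scenario of a multi-task model with three tasks and binary labels $y\in\{\pm1\}$ (preparations $\mathbf{S}_{\vec{x}}$, $\vec{x}\in D$; effects $\mathbf{E}^k_{\pm}$, $k=1,2,3$, together with $\Omega$ and $\emptyset$). Suppose the effect densities satisfy the operational equivalence $$\tfrac13\mathbf{E}^1_{+}+\tfrac13\mathbf{E}^2_{+}+\tfrac13\mathbf{E}^3_{+}\ \sim\ \tfrac13\mathbf{E}^1_{-}+\tfrac13\mathbf{E}^2_{-}+\tfrac13\mathbf{E}^3_{-},$$ and that $s_1,\dots,s_6$ are preparation densities satisfying $$\tfrac12 s_1+\tfrac12 s_2\ \sim\ \tfrac12 s_3+\tfrac12 s_4\ \sim\ \tfrac12 s_5+\tfrac12 s_6.$$ If the multi-task model is noncontextual, then $$P(\mathbf{E}^1_+\mid s_1)+P(\mathbf{E}^2_+\mid s_3)+P(\mathbf{E}^3_+\mid s_5)\le\tfrac52.$$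
   Context: A multi-task model is a family of conditional distributions $\mathcal{P}^k(y\mid\vec{x})$, $k=1,2,3$, $y\in\{\pm1\}$, $\vec{x}\in D$. Its operational scenario has preparations $\mathbf{S}_{\vec{x}}$, effects $\mathbf{E}^k_y$, trivial effect $\Omega$ and null effect $\emptyset$, with statistics $P(\mathbf{E}^k_y\mid\mathbf{S}_{\vec{x}})=\mathcal{P}^k(y\mid\vec{x})$, $P(\Omega\mid\mathbf{S})=1$, $P(\emptyset\mid\mathbf{S})=0$. Preparation (resp. effect) densities are finite convex combinations of preparations (resp. effects), with statistics extended bilinearly. Two preparation densities are operationally equivalent ($\sim$) iff they give equal probabilities for all effects; two effect densities are operationally equivalent iff they give equal probabilities for all preparations. An ontological model consists of a measure space $\Lambda$, a probability density $\mu_{\mathbf{S}}$ on $\Lambda$ for each preparation and a response function $\xi_{\mathbf{E}}:\Lambda\to[0,1]$ for each effect, with $\xi_\Omega\equiv1$, $\xi_\emptyset\equiv0$, extended linearly to densities, such that $P(\mathbf{E}\mid\mathbf{S})=\int_\Lambda\mu_{\mathbf{S}}(\lambda)\xi_{\mathbf{E}}(\lambda)d\lambda$. It is noncontextual if operationally equivalent preparation densities have identical $\mu$ and operationally equivalent effect densities have identical $\xi$. The multi-task model is noncontextual iff its operational scenario admits a noncontextual ontological model. *)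

theory Defs
  imports "HOL-Analysis.Analysis"
begin

text \<open>Effects of the operational scenario: Eff k y is E^k_y (task k in {1,2,3},
label y in {1,-1}), Omega is the trivial effect, Null the null effect.\<close>
datatype eff = Eff nat int | Omega | Null

definition valid_eff :: "eff \<Rightarrow> bool" where
  "valid_eff e \<longleftrightarrow> (\<exists>k y. e = Eff k y \<and> k \<in> {1,2,3} \<and> y \<in> {1,-1}) \<or> e = Omega \<or> e = Null"

definition multitask_model :: "'x set \<Rightarrow> (nat \<Rightarrow> int \<Rightarrow> 'x \<Rightarrow> real) \<Rightarrow> bool" where
  "multitask_model D P \<longleftrightarrow>
     (\<forall>k\<in>{1,2,3}. \<forall>x\<in>D. P k 1 x \<ge> 0 \<and> P k (-1) x \<ge> 0 \<and> P k 1 x + P k (-1) x = 1)"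

fun stat :: "(nat \<Rightarrow> int \<Rightarrow> 'x \<Rightarrow> real) \<Rightarrow> eff \<Rightarrow> 'x \<Rightarrow> real" where
  "stat P (Eff k y) x = P k y x"
| "stat P Omega x = 1"
| "stat P Null x = 0"

definition supp :: "('a \<Rightarrow> real) \<Rightarrow> 'a set" where
  "supp d = {a. d a \<noteq> 0}"

definition density :: "'a set \<Rightarrow> ('a \<Rightarrow> real) \<Rightarrow> bool" where
  "density A d \<longleftrightarrow> finite (supp d) \<and> supp d \<subseteq> A \<and> (\<forall>a. d a \<ge> 0) \<and> sum d (supp d) = 1"

definition prep_density :: "'x set \<Rightarrow> ('x \<Rightarrow> real) \<Rightarrow> bool" where
  "prep_density D s \<longleftrightarrow> density D s"

definition eff_density :: "(eff \<Rightarrow> real) \<Rightarrow> bool" where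
  "eff_density ed \<longleftrightarrow> density {e. valid_eff e} ed"

text \<open>Point mass (a pure preparation / effect seen as a density).\<close>
definition pt :: "'a \<Rightarrow> 'a \<Rightarrow> real" where
  "pt a = (\<lambda>b. if b = a then 1 else 0)"

definition prob :: "(nat \<Rightarrow> int \<Rightarrow> 'x \<Rightarrow> real) \<Rightarrow> (eff \<Rightarrow> real) \<Rightarrow> ('x \<Rightarrow> real) \<Rightarrow> real" where
  "prob P ed s = (\<Sum>e\<in>supp ed. \<Sum>x\<in>supp s. ed e * s x * stat P e x)"

definition prep_equiv :: "(nat \<Rightarrow> int \<Rightarrow> 'x \<Rightarrow> real) \<Rightarrow> ('x \<Rightarrow> real) \<Rightarrow> ('x \<Rightarrow> real) \<Rightarrow> bool" where
  "prep_equiv P s s' \<longleftrightarrow> (\<forall>e. valid_eff e \<longrightarrow> prob P (pt e) s = prob P (pt e) s')"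

definition eff_equiv :: "'x set \<Rightarrow> (nat \<Rightarrow> int \<Rightarrow> 'x \<Rightarrow> real) \<Rightarrow> (eff \<Rightarrow> real) \<Rightarrow> (eff \<Rightarrow> real) \<Rightarrow> bool" where
  "eff_equiv D P ed ed' \<longleftrightarrow> (\<forall>x\<in>D. prob P ed (pt x) = prob P ed' (pt x))"

text \<open>Ontological model on the measure space M (Lambda = space M): densities mu x for the
preparations S_x, response functions xi e for the effects.\<close>
definition ont_model :: "'x set \<Rightarrow> (nat \<Rightarrow> int \<Rightarrow> 'x \<Rightarrow> real) \<Rightarrow> 'l measure
    \<Rightarrow> ('x \<Rightarrow> 'l \<Rightarrow> real) \<Rightarrow> (eff \<Rightarrow> 'l \<Rightarrow> real) \<Rightarrow> bool" where
  "ont_model D P M mu xi \<longleftrightarrow>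
     (\<forall>x\<in>D. mu x \<in> borel_measurable M \<and> (\<forall>l\<in>space M. mu x l \<ge> 0)
            \<and> integrable M (mu x) \<and> integral\<^sup>L M (mu x) = 1)
   \<and> (\<forall>e. valid_eff e \<longrightarrow> xi e \<in> borel_measurable M \<and> (\<forall>l\<in>space M. 0 \<le> xi e l \<and> xi e l \<le> 1))
   \<and> (\<forall>l\<in>space M. xi Omega l = 1) \<and> (\<forall>l\<in>space M. xi Null l = 0)
   \<and> (\<forall>e x. valid_eff e \<and> x \<in> D \<longrightarrow>
        integrable M (\<lambda>l. mu x l * xi e l) \<and> stat P e x = (\<integral>l. mu x l * xi e l \<partial>M))"

definition mu_dens :: "('x \<Rightarrow> 'l \<Rightarrow> real) \<Rightarrow> ('x \<Rightarrow> real) \<Rightarrow> 'l \<Rightarrow> real" where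
  "mu_dens mu s = (\<lambda>l. \<Sum>x\<in>supp s. s x * mu x l)"

definition xi_dens :: "(eff \<Rightarrow> 'l \<Rightarrow> real) \<Rightarrow> (eff \<Rightarrow> real) \<Rightarrow> 'l \<Rightarrow> real" where
  "xi_dens xi ed = (\<lambda>l. \<Sum>e\<in>supp ed. ed e * xi e l)"

definition noncontextual_model :: "'x set \<Rightarrow> (nat \<Rightarrow> int \<Rightarrow> 'x \<Rightarrow> real) \<Rightarrow> 'l measure
    \<Rightarrow> ('x \<Rightarrow> 'l \<Rightarrow> real) \<Rightarrow> (eff \<Rightarrow> 'l \<Rightarrow> real) \<Rightarrow> bool" where
  "noncontextual_model D P M mu xi \<longleftrightarrow> ont_model D P M mu xi
   \<and> (\<forall>s s'. prep_density D s \<and> prep_density D s' \<and> prep_equiv P s s' \<longrightarrow>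
        (\<forall>l\<in>space M. mu_dens mu s l = mu_dens mu s' l))
   \<and> (\<forall>ed ed'. eff_density ed \<and> eff_density ed' \<and> eff_equiv D P ed ed' \<longrightarrow>
        (\<forall>l\<in>space M. xi_dens xi ed l = xi_dens xi ed' l))"

definition mix2 :: "('x \<Rightarrow> real) \<Rightarrow> ('x \<Rightarrow> real) \<Rightarrow> 'x \<Rightarrow> real" where
  "mix2 a b = (\<lambda>x. a x / 2 + b x / 2)"

definition avg_eff :: "int \<Rightarrow> eff \<Rightarrow> real" where
  "avg_eff y = (\<lambda>e. if e \<in> {Eff 1 y, Eff 2 y, Eff 3 y} then 1/3 else 0)"

end

theory Submission
  imports Defs
begin

lemma supp_pt: "supp (pt a) = {a}"
  unfolding supp_def pt_def by auto

lemma sum_supp_ext: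
  assumes "finite A" "supp d \<subseteq> A"
  shows "(\<Sum>x\<in>supp d. d x * f x) = (\<Sum>x\<in>A. d x * f x)"
  by (rule sum.mono_neutral_left) (use assms in \<open>auto simp: supp_def\<close>)

lemma sum_supp_ext1:
  assumes "finite A" "supp d \<subseteq> A"
  shows "sum d (supp d) = sum d A"
  by (rule sum.mono_neutral_left) (use assms in \<open>auto simp: supp_def\<close>)

lemma prob_pt_left: "prob P (pt e) s = (\<Sum>x\<in>supp s. s x * stat P e x)"
  unfolding prob_def supp_pt by (simp add: pt_def)

lemma prob_pt_right: "prob P ed (pt x) = (\<Sum>e\<in>supp ed. ed e * stat P e x)"
  unfolding prob_def supp_pt by (simp add: pt_def)

lemma supp_mix2: "supp (mix2 a b) \<subseteq> supp a \<union> supp b"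
  unfolding supp_def mix2_def by auto

lemma mix2_density:
  assumes "prep_density D a" "prep_density D b"
  shows "prep_density D (mix2 a b)"
proof -
  have fa: "finite (supp a)" "supp a \<subseteq> D" "\<And>x. a x \<ge> 0" "sum a (supp a) = 1"
    using assms(1) unfolding prep_density_def density_def by auto
  have fb: "finite (supp b)" "supp b \<subseteq> D" "\<And>x. b x \<ge> 0" "sum b (supp b) = 1"
    using assms(2) unfolding prep_density_def density_def by auto
  let ?U = "supp a \<union> supp b"
  have fU: "finite ?U" using fa fb by auto
  have "sum (mix2 a b) (supp (mix2 a b)) = sum (mix2 a b) ?U"
    by (rule sum_supp_ext1[OF fU supp_mix2])
  also have "\<dots> = sum a ?U / 2 + sum b ?U / 2"
    unfolding mix2_def by (simp add: sum.distrib sum_divide_distrib)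
  also have "sum a ?U = 1" using sum_supp_ext1[of ?U a] fa fU by auto
  also have "sum b ?U = 1" using sum_supp_ext1[of ?U b] fb fU by auto
  finally have s: "sum (mix2 a b) (supp (mix2 a b)) = 1" by simp
  show ?thesis unfolding prep_density_def density_def
    using s fa fb supp_mix2[of a b] finite_subset[OF supp_mix2 fU]
    by (auto simp: mix2_def)
qed

lemma ptw:
  fixes m n x :: real
  assumes "0 \<le> m" "m \<le> 2*n" "0 \<le> x" "x \<le> 1"
  shows "m * x \<le> m/2 + 2*n * max (x - 1/2) 0"
proof (cases "x \<ge> 1/2")
  case True
  have "m * (x - 1/2) \<le> 2*n * (x - 1/2)" using True assms by (intro mult_right_mono) auto
  then show ?thesis using True by (simp add: algebra_simps)
next
  case False
  have "m * (x - 1/2) \<le> 0" using False assms by (simp add: mult_nonneg_nonpos)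
  then show ?thesis using False by (simp add: algebra_simps)
qed

lemma ptw3:
  fixes m1 m2 m3 m4 m5 m6 a b c :: real
  assumes "0 \<le> m1" "0 \<le> m2" "0 \<le> m3" "0 \<le> m4" "0 \<le> m5" "0 \<le> m6"
    "m1 + m2 = m3 + m4" "m3 + m4 = m5 + m6"
    "0 \<le> a" "a \<le> 1" "0 \<le> b" "b \<le> 1" "0 \<le> c" "c \<le> 1" "a + b + c = 3/2"
  shows "m1 * a + m3 * b + m5 * c \<le> (m1 + m3 + m5)/2 + (m1 + m2)/2"
proof -
  define n where "n = (m1 + m2)/2"
  define pa where "pa = max (a - 1/2) (0::real)"
  define pb where "pb = max (b - 1/2) (0::real)"
  define pc where "pc = max (c - 1/2) (0::real)"
  have "m1 * a \<le> m1/2 + 2 * n * max (a - 1/2) 0" by (rule ptw) (use assms in \<open>auto simp: n_def\<close>)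
  moreover have "m3 * b \<le> m3/2 + 2 * n * max (b - 1/2) 0" by (rule ptw) (use assms in \<open>auto simp: n_def\<close>)
  moreover have "m5 * c \<le> m5/2 + 2 * n * max (c - 1/2) 0" by (rule ptw) (use assms in \<open>auto simp: n_def\<close>)
  moreover have "max (a - 1/2) 0 + max (b - 1/2) 0 + max (c - 1/2) 0 \<le> 1/2"
    using assms by (simp add: max_def)
  moreover have "n \<ge> 0" using assms by (simp add: n_def)
  ultimately have "m1 * a + m3 * b + m5 * c \<le> (m1 + m3 + m5)/2
      + 2 * n * (max (a - 1/2) 0 + max (b - 1/2) 0 + max (c - 1/2) 0)"
    unfolding pa_def[symmetric] pb_def[symmetric] pc_def[symmetric] by (simp only: distrib_left add_divide_distrib)
  also have "\<dots> \<le> (m1 + m3 + m5)/2 + 2 * n * (1/2)"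
    using \<open>n \<ge> 0\<close> \<open>max (a - 1/2) 0 + max (b - 1/2) 0 + max (c - 1/2) 0 \<le> 1/2\<close>
    by (intro add_left_mono mult_left_mono) auto
  finally show ?thesis using n_def by linarith
qed


theorem lemma1:
  fixes D :: "'x set" and P :: "nat \<Rightarrow> int \<Rightarrow> 'x \<Rightarrow> real"
    and M :: "'l measure" and mu :: "'x \<Rightarrow> 'l \<Rightarrow> real" and xi :: "eff \<Rightarrow> 'l \<Rightarrow> real"
    and s1 s2 s3 s4 s5 s6 :: "'x \<Rightarrow> real"
  assumes "multitask_model D P"
    and "noncontextual_model D P M mu xi"
    and "eff_equiv D P (avg_eff 1) (avg_eff (-1))"
    and "prep_density D s1" "prep_density D s2" "prep_density D s3"
    and "prep_density D s4" "prep_density D s5" "prep_density D s6"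
    and "prep_equiv P (mix2 s1 s2) (mix2 s3 s4)"
    and "prep_equiv P (mix2 s3 s4) (mix2 s5 s6)"
  shows "prob P (pt (Eff 1 1)) s1 + prob P (pt (Eff 2 1)) s3 + prob P (pt (Eff 3 1)) s5 \<le> 5/2"
proof -
  note mm = assms(1)[unfolded multitask_model_def]
  have ont: "ont_model D P M mu xi"
    and NCp: "\<And>s s'. prep_density D s \<Longrightarrow> prep_density D s' \<Longrightarrow> prep_equiv P s s' \<Longrightarrow>
        (\<forall>l\<in>space M. mu_dens mu s l = mu_dens mu s' l)"
    and NCe: "\<And>ed ed'. eff_density ed \<Longrightarrow> eff_density ed' \<Longrightarrow> eff_equiv D P ed ed' \<Longrightarrow>
        (\<forall>l\<in>space M. xi_dens xi ed l = xi_dens xi ed' l)"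
    using assms(2) unfolding noncontextual_model_def by blast+
  have muD: "\<And>x. x \<in> D \<Longrightarrow> integrable M (mu x) \<and> integral\<^sup>L M (mu x) = 1 \<and> (\<forall>l\<in>space M. mu x l \<ge> 0)"
    using ont unfolding ont_model_def by blast
  have xiV: "\<And>e l. valid_eff e \<Longrightarrow> l \<in> space M \<Longrightarrow> 0 \<le> xi e l \<and> xi e l \<le> 1"
    using ont unfolding ont_model_def by blast
  have xiO: "\<And>l. l \<in> space M \<Longrightarrow> xi Omega l = 1" and xiN: "\<And>l. l \<in> space M \<Longrightarrow> xi Null l = 0"
    using ont unfolding ont_model_def by blast+
  have st: "\<And>e x. valid_eff e \<Longrightarrow> x \<in> D \<Longrightarrow>
        integrable M (\<lambda>l. mu x l * xi e l) \<and> stat P e x = (\<integral>l. mu x l * xi e l \<partial>M)"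
    using ont unfolding ont_model_def by blast
  have vE: "valid_eff (Eff k y)" if "k \<in> {1,2,3}" "y \<in> {1,-1}" for k y
    using that unfolding valid_eff_def by blast
  have supp_avg: "supp (avg_eff y) = {Eff 1 y, Eff 2 y, Eff 3 y}" for y
    unfolding supp_def avg_eff_def by auto
  have avg_dens: "eff_density (avg_eff y)" if "y \<in> {1,-1}" for y
    unfolding eff_density_def density_def supp_avg
    using that by (auto simp: avg_eff_def valid_eff_def)
  have xi_avg: "xi_dens xi (avg_eff y) l = (xi (Eff 1 y) l + xi (Eff 2 y) l + xi (Eff 3 y) l)/3" for y l
    unfolding xi_dens_def supp_avg by (simp add: avg_eff_def)
  have sumpm: "(xi (Eff 1 1) l + xi (Eff 2 1) l + xi (Eff 3 1) l)
      = (xi (Eff 1 (-1)) l + xi (Eff 2 (-1)) l + xi (Eff 3 (-1)) l)" if "l \<in> space M" for l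
    using NCe[OF avg_dens avg_dens assms(3)] that xi_avg by auto
  define omn where "omn = (\<lambda>e. if e = Omega \<or> e = Null then (1::real)/2 else 0)"
  define h where "h = (\<lambda>k e. if e = Eff k 1 \<or> e = Eff k (-1) then (1::real)/2 else 0)"
  have supp_omn: "supp omn = {Omega, Null}" unfolding supp_def omn_def by auto
  have supp_h: "supp (h k) = {Eff k 1, Eff k (-1)}" for k unfolding supp_def h_def by auto
  have omn_dens: "eff_density omn" unfolding eff_density_def density_def supp_omn
    by (auto simp: omn_def valid_eff_def)
  have h_dens: "eff_density (h k)" if "k \<in> {1,2,3}" for k unfolding eff_density_def density_def supp_h
    using that by (auto simp: h_def valid_eff_def)
  have h_eq: "eff_equiv D P (h k) omn" if "k \<in> {1,2,3}" for k
    unfolding eff_equiv_def prob_pt_right supp_h supp_omn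
    using that mm by (auto simp: h_def omn_def)
  have pm1: "xi (Eff k 1) l + xi (Eff k (-1)) l = 1" if "k \<in> {1,2,3}" "l \<in> space M" for k l
    using NCe[OF h_dens[OF that(1)] omn_dens h_eq[OF that(1)]] that(2) xiO xiN
    unfolding xi_dens_def supp_h supp_omn by (auto simp: h_def omn_def)
  have xisum: "xi (Eff 1 1) l + xi (Eff 2 1) l + xi (Eff 3 1) l = 3/2" if "l \<in> space M" for l
    using sumpm[OF that] pm1[OF _ that, of 1] pm1[OF _ that, of 2] pm1[OF _ that, of 3] by auto
  define S where "S = supp s1 \<union> supp s2 \<union> supp s3 \<union> supp s4 \<union> supp s5 \<union> supp s6"
  have dens: "finite (supp s) \<and> supp s \<subseteq> D \<and> (\<forall>x. s x \<ge> 0) \<and> sum s (supp s) = 1"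
    if "prep_density D s" for s using that unfolding prep_density_def density_def by blast
  note d1 = dens[OF assms(4)] and d2 = dens[OF assms(5)] and d3 = dens[OF assms(6)]
    and d4 = dens[OF assms(7)] and d5 = dens[OF assms(8)] and d6 = dens[OF assms(9)]
  have fS: "finite S" and SD: "S \<subseteq> D" unfolding S_def using d1 d2 d3 d4 d5 d6 by auto
  define m where "m = (\<lambda>s l. \<Sum>x\<in>S. s x * mu x l)"
  have mu_dens_m: "mu_dens mu s l = m s l" if "supp s \<subseteq> S" for s l
    unfolding mu_dens_def m_def by (rule sum_supp_ext[OF fS that])
  have m_mix: "m (mix2 a b) l = (m a l + m b l)/2" for a b l
    proof -
    have "(\<Sum>x\<in>S. (a x / 2 + b x / 2) * mu x l) = (\<Sum>x\<in>S. a x * mu x l / 2 + b x * mu x l / 2)"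
      by (rule sum.cong) (auto simp: algebra_simps)
    also have "\<dots> = (\<Sum>x\<in>S. a x * mu x l) / 2 + (\<Sum>x\<in>S. b x * mu x l) / 2"
      by (simp only: sum.distrib sum_divide_distrib)
    finally show ?thesis unfolding m_def mix2_def by simp
  qed
  have ms: "supp (mix2 a b) \<subseteq> S" if "supp a \<subseteq> S" "supp b \<subseteq> S" for a b
    using supp_mix2[of a b] that by auto
  have s12: "supp s1 \<subseteq> S" "supp s2 \<subseteq> S" "supp s3 \<subseteq> S" "supp s4 \<subseteq> S" "supp s5 \<subseteq> S" "supp s6 \<subseteq> S"
    unfolding S_def by auto
  have eq1: "m s1 l + m s2 l = m s3 l + m s4 l" if "l \<in> space M" for l
    using NCp[OF mix2_density[OF assms(4,5)] mix2_density[OF assms(6,7)] assms(10)] that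
      mu_dens_m[OF ms[OF s12(1,2)]] mu_dens_m[OF ms[OF s12(3,4)]] m_mix by auto
  have eq2: "m s3 l + m s4 l = m s5 l + m s6 l" if "l \<in> space M" for l
    using NCp[OF mix2_density[OF assms(6,7)] mix2_density[OF assms(8,9)] assms(11)] that
      mu_dens_m[OF ms[OF s12(3,4)]] mu_dens_m[OF ms[OF s12(5,6)]] m_mix by auto
  have m_nn: "m s l \<ge> 0" if "\<forall>x. s x \<ge> 0" "l \<in> space M" for s l
    unfolding m_def using that muD SD by (intro sum_nonneg mult_nonneg_nonneg) auto
  have m_int: "integrable M (m s)" for s
    unfolding m_def using muD SD by (intro Bochner_Integration.integrable_sum integrable_mult_right) auto
  have m_integral: "integral\<^sup>L M (m s) = 1" if "prep_density D s" "supp s \<subseteq> S" for s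
  proof -
    have "integral\<^sup>L M (m s) = (\<Sum>x\<in>S. s x * integral\<^sup>L M (mu x))"
      unfolding m_def using muD SD by (subst Bochner_Integration.integral_sum) auto
    also have "\<dots> = sum s S" using muD SD by (intro sum.cong) auto
    also have "\<dots> = 1" using sum_supp_ext1[OF fS that(2)] dens[OF that(1)] by simp
    finally show ?thesis .
  qed
  have m_prob: "prob P (pt e) s = (\<integral>l. m s l * xi e l \<partial>M)
      \<and> integrable M (\<lambda>l. m s l * xi e l)" if "supp s \<subseteq> S" "valid_eff e" for s e
  proof -
    have ints: "\<And>x. x \<in> S \<Longrightarrow> integrable M (\<lambda>l. s x * (mu x l * xi e l))"
      using st[OF that(2)] SD by auto
    have fe: "(\<lambda>l. m s l * xi e l) = (\<lambda>l. \<Sum>x\<in>S. s x * (mu x l * xi e l))"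
      unfolding m_def by (simp add: sum_distrib_right mult.assoc)
    have "prob P (pt e) s = (\<Sum>x\<in>S. s x * stat P e x)"
      unfolding prob_pt_left by (rule sum_supp_ext[OF fS that(1)])
    also have "\<dots> = (\<Sum>x\<in>S. s x * (\<integral>l. mu x l * xi e l \<partial>M))"
      using st[OF that(2)] SD by (intro sum.cong) auto
    also have "\<dots> = (\<integral>l. m s l * xi e l \<partial>M)"
      unfolding fe using ints by (subst Bochner_Integration.integral_sum) auto
    finally show ?thesis unfolding fe using ints by auto
  qed
  have v1: "valid_eff (Eff 1 1)" "valid_eff (Eff 2 1)" "valid_eff (Eff 3 1)" using vE by auto
  note p1 = m_prob[OF s12(1) v1(1)] and p3 = m_prob[OF s12(3) v1(2)] and p5 = m_prob[OF s12(5) v1(3)]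
  have "prob P (pt (Eff 1 1)) s1 + prob P (pt (Eff 2 1)) s3 + prob P (pt (Eff 3 1)) s5
      = (\<integral>l. m s1 l * xi (Eff 1 1) l + m s3 l * xi (Eff 2 1) l + m s5 l * xi (Eff 3 1) l \<partial>M)"
    using p1 p3 p5 by simp
  also have "\<dots> \<le> (\<integral>l. (m s1 l + m s3 l + m s5 l)/2 + (m s1 l + m s2 l)/2 \<partial>M)"
  proof (rule integral_mono)
    show "integrable M (\<lambda>l. m s1 l * xi (Eff 1 1) l + m s3 l * xi (Eff 2 1) l + m s5 l * xi (Eff 3 1) l)"
      using p1 p3 p5 by auto
    show "integrable M (\<lambda>l. (m s1 l + m s3 l + m s5 l)/2 + (m s1 l + m s2 l)/2)"
      using m_int by auto
    fix l assume l: "l \<in> space M"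
    show "m s1 l * xi (Eff 1 1) l + m s3 l * xi (Eff 2 1) l + m s5 l * xi (Eff 3 1) l
        \<le> (m s1 l + m s3 l + m s5 l)/2 + (m s1 l + m s2 l)/2"
      by (rule ptw3[of _ "m s2 l" _ "m s4 l" _ "m s6 l"])
        (use l eq1 eq2 xisum xiV[OF v1(1) l] xiV[OF v1(2) l] xiV[OF v1(3) l]
           m_nn d1 d2 d3 d4 d5 d6 in auto)
  qed
  also have "\<dots> = 5/2"
    using m_int m_integral[OF assms(4) s12(1)] m_integral[OF assms(5) s12(2)]
      m_integral[OF assms(6) s12(3)] m_integral[OF assms(8) s12(5)]
    by (simp add: integral_add integral_divide)
  finally show ?thesis .
qed

end
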